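(* Let $(\Lambda,d)$ be a rank-2 Bratteli diagram of depth $N$, with $\Lambda^0=\bigsqcup_n\bigsqcup_{j=1}^{c_n}V_{n,j}$ as described in the context. For $0\le n<N$, $1\le j\le c_n$ and $1\le i\le c_{n+1}$: (1) the sets $v\Lambda^{e_1}V_{n+1,i}$, $v\in V_{n,j}$, all have the same cardinality, denoted $A_n(i,j)$; (2) the sets $V_{n,j}\Lambda^{e_1}w$, $w\in V_{n+1,i}$, all have the same cardinality, denoted $B_n(i,j)$; (3) $A_n(i,j)\,|V_{n,j}|=|V_{n,j}\Lambda^{e_1}V_{n+1,i}|=|V_{n+1,i}|\,B_n(i,j)$. The resulting matrices $A_n,B_n\in M_{c_{n+1},c_n}(\mathbb Z_+)$ have no zero rows or columns. Letting $T_n\in M_{c_n}(\mathbb Z_+)$ be the diagonal matrix with $T_n(j,j)=|V_{n,j}|$, we have $A_nT_n=T_{n+1}B_n$ for $0\le n<N$.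
   Context: A $2$-graph is a countable category $\Lambda$ with a functor $d:\Lambda\to\mathbb N^2$ satisfying unique factorisation (if $d(\lambda)=m+n$ there are unique $\mu,\nu$ with $d(\mu)=m,d(\nu)=n,\lambda=\mu\nu$). Vertices $\Lambda^0$ = degree-$0$ paths; $r,s$ range/source; $\Lambda^n=d^{-1}(n)$; $e_1=(1,0),e_2=(0,1)$; $VEW=\{\lambda\in E:r(\lambda)\in V,s(\lambda)\in W\}$ (write $v$ for $\{v\}$). Row-finite: each $v\Lambda^n$ finite. Blue edges: $\Lambda^{e_1}$; red edges: $\Lambda^{e_2}$; red paths: degree in $\mathbb Ne_2$. $\lambda(m,n)$ is the unique path with $\lambda=\lambda'\lambda(m,n)\lambda''$, $d(\lambda')=m$, $d(\lambda(m,n))=n-m$, $\lambda(n)=\lambda(n,n)$. A cycle: $d(\lambda)\ne0$, $r(\lambda)=s(\lambda)$, $\lambda(n)\ne s(\lambda)$ for $0<n<d(\lambda)$; isolated: no $n\le d(\lambda)$ with $r(\lambda)\Lambda^n\setminus\{\lambda(0,n)\}\ne\emptyset$ and no $n\le d(\lambda)$ with $\Lambda^ns(\lambda)\setminus\{\lambda(d(\lambda)-n,d(\lambda))\}\ne\emptyset$. A rank-2 Bratteli diagram of depth $N\in\mathbb N\cup\{\infty\}$ is a row-finite 2-graph with $\Lambda^0=\bigsqcup_{0\le n\le N}V_n$ ($n$ ranging over all of $\mathbb N$ if $N=\infty$), each $V_n$ nonempty and finite, such that: (1) every blue edge $e$ has $r(e)\in V_n$, $s(e)\in V_{n+1}$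 for some $n$; (2) every vertex $v$ with $\Lambda^{e_1}v=\emptyset$ lies in $V_0$ and every vertex $v$ with $v\Lambda^{e_1}=\emptyset$ lies in $V_N$ (if $N=\infty$ there is no vertex with $v\Lambda^{e_1}=\emptyset$); (3) every vertex lies on an isolated cycle consisting of red edges, and every red edge has range and source in the same $V_n$. Consequently each $V_n=\bigsqcup_{j=1}^{c_n}V_{n,j}$ where the $V_{n,j}$ are the vertex sets of the distinct isolated red cycles meeting $V_n$. *)

theory Defs
  imports Main "HOL-Library.Product_Plus" "HOL-Library.Product_Order"
    "HOL-Library.Countable_Set" "HOL-Library.Extended_Nat"
begin

text \<open>A category given by its set of morphisms (paths); objects are identified
with their identity morphisms.  Degrees live in nat \<times> nat with componentwise
order and addition.\<close>

record 'a twograph =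
  paths :: "'a set"
  rg :: "'a \<Rightarrow> 'a"
  sc :: "'a \<Rightarrow> 'a"
  cmp :: "'a \<Rightarrow> 'a \<Rightarrow> 'a"
  dg :: "'a \<Rightarrow> nat \<times> nat"

definition is_2graph :: "'a twograph \<Rightarrow> bool" where
  "is_2graph G \<longleftrightarrow>
     countable (paths G) \<and>
     (\<forall>l\<in>paths G. rg G l \<in> paths G \<and> sc G l \<in> paths G \<and>
        rg G (rg G l) = rg G l \<and> sc G (rg G l) = rg G l \<and>
        rg G (sc G l) = sc G l \<and> sc G (sc G l) = sc G l \<and>
        cmp G (rg G l) l = l \<and> cmp G l (sc G l) = l) \<and>
     (\<forall>l\<in>paths G. \<forall>m\<in>paths G. sc G l = rg G m \<longrightarrow>
        cmp G l m \<in> paths G \<and> rg G (cmp G l m) = rg G l \<and>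
        sc G (cmp G l m) = sc G m \<and> dg G (cmp G l m) = dg G l + dg G m) \<and>
     (\<forall>l\<in>paths G. \<forall>m\<in>paths G. \<forall>k\<in>paths G. sc G l = rg G m \<and> sc G m = rg G k \<longrightarrow>
        cmp G (cmp G l m) k = cmp G l (cmp G m k)) \<and>
     (\<forall>l\<in>paths G. \<forall>m n. dg G l = m + n \<longrightarrow>
        (\<exists>!p. fst p \<in> paths G \<and> snd p \<in> paths G \<and> dg G (fst p) = m \<and>
               dg G (snd p) = n \<and> sc G (fst p) = rg G (snd p) \<and>
               cmp G (fst p) (snd p) = l))"

definition vertices :: "'a twograph \<Rightarrow> 'a set" where
  "vertices G = {l \<in> paths G. dg G l = 0}"

definition row_finite :: "'a twograph \<Rightarrow> bool" where
  "row_finite G \<longleftrightarrow> (\<forall>v\<in>vertices G. \<forall>n. finite {l \<in> paths G. rg G l = v \<and> dg G l = n})"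

text \<open>The segment lambda(m,n), for m \<le> n \<le> d(lambda).\<close>
definition seg :: "'a twograph \<Rightarrow> 'a \<Rightarrow> nat \<times> nat \<Rightarrow> nat \<times> nat \<Rightarrow> 'a" where
  "seg G l m n = (THE u. \<exists>a b. a \<in> paths G \<and> u \<in> paths G \<and> b \<in> paths G \<and>
      dg G a = m \<and> dg G u = n - m \<and> sc G a = rg G u \<and> sc G u = rg G b \<and>
      l = cmp G (cmp G a u) b)"

definition is_cycle :: "'a twograph \<Rightarrow> 'a \<Rightarrow> bool" where
  "is_cycle G l \<longleftrightarrow> l \<in> paths G \<and> dg G l \<noteq> 0 \<and> rg G l = sc G l \<and>
     (\<forall>n. 0 < n \<and> n < dg G l \<longrightarrow> seg G l n n \<noteq> sc G l)"

definition isolated :: "'a twograph \<Rightarrow> 'a \<Rightarrow> bool" where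
  "isolated G l \<longleftrightarrow>
     \<not> (\<exists>n \<le> dg G l. {x \<in> paths G. rg G x = rg G l \<and> dg G x = n} - {seg G l 0 n} \<noteq> {}) \<and>
     \<not> (\<exists>n \<le> dg G l. {x \<in> paths G. sc G x = sc G l \<and> dg G x = n}
                          - {seg G l (dg G l - n) (dg G l)} \<noteq> {})"

definition red_path :: "'a twograph \<Rightarrow> 'a \<Rightarrow> bool" where
  "red_path G l \<longleftrightarrow> fst (dg G l) = 0"

definition cycle_vertices :: "'a twograph \<Rightarrow> 'a \<Rightarrow> 'a set" where
  "cycle_vertices G l = {seg G l m m | m. m \<le> dg G l}"

definition blue_edges :: "'a twograph \<Rightarrow> 'a set \<Rightarrow> 'a set \<Rightarrow> 'a set" where
  "blue_edges G X Y = {e \<in> paths G. dg G e = (1, 0) \<and> rg G e \<in> X \<and> sc G e \<in> Y}"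

text \<open>Rank-2 Bratteli diagram of depth N (N = \<infinity> allowed); V n is the n-th level,
only meaningful for n \<le> N.\<close>
definition rank2_bratteli :: "'a twograph \<Rightarrow> enat \<Rightarrow> (nat \<Rightarrow> 'a set) \<Rightarrow> bool" where
  "rank2_bratteli G N V \<longleftrightarrow>
     is_2graph G \<and> row_finite G \<and>
     (\<forall>n. enat n \<le> N \<longrightarrow> V n \<noteq> {} \<and> finite (V n)) \<and>
     vertices G = (\<Union>n\<in>{n. enat n \<le> N}. V n) \<and>
     (\<forall>m n. enat m \<le> N \<and> enat n \<le> N \<and> m \<noteq> n \<longrightarrow> V m \<inter> V n = {}) \<and>
     (\<forall>e\<in>paths G. dg G e = (1, 0) \<longrightarrow>
        (\<exists>n. enat (Suc n) \<le> N \<and> rg G e \<in> V n \<and> sc G e \<in> V (Suc n))) \<and>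
     (\<forall>v\<in>vertices G. {e \<in> paths G. dg G e = (1, 0) \<and> sc G e = v} = {} \<longrightarrow> v \<in> V 0) \<and>
     (\<forall>v\<in>vertices G. {e \<in> paths G. dg G e = (1, 0) \<and> rg G e = v} = {} \<longrightarrow>
        N \<noteq> \<infinity> \<and> v \<in> V (the_enat N)) \<and>
     (\<forall>v\<in>vertices G. \<exists>l. is_cycle G l \<and> isolated G l \<and> red_path G l \<and>
        v \<in> cycle_vertices G l) \<and>
     (\<forall>e\<in>paths G. dg G e = (0, 1) \<longrightarrow>
        (\<exists>n. enat n \<le> N \<and> rg G e \<in> V n \<and> sc G e \<in> V n))"

definition cycle_classes :: "'a twograph \<Rightarrow> (nat \<Rightarrow> 'a set) \<Rightarrow> nat \<Rightarrow> 'a set set" where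
  "cycle_classes G V n = {cycle_vertices G l | l.
      is_cycle G l \<and> isolated G l \<and> red_path G l \<and> cycle_vertices G l \<inter> V n \<noteq> {}}"

text \<open>Matrix entries, indexed by the cycle classes Y (row, level n+1) and X (column, level n).\<close>
definition Amat :: "'a twograph \<Rightarrow> 'a set \<Rightarrow> 'a set \<Rightarrow> nat" where
  "Amat G Y X = card (blue_edges G {SOME v. v \<in> X} Y)"

definition Bmat :: "'a twograph \<Rightarrow> 'a set \<Rightarrow> 'a set \<Rightarrow> nat" where
  "Bmat G Y X = card (blue_edges G X {SOME w. w \<in> Y})"

definition Tmat :: "'a set \<Rightarrow> 'a set \<Rightarrow> nat" where
  "Tmat X X' = (if X = X' then card X else 0)"

end

theory Submission imports Defs begin

definition chainX :: "'a twograph \<Rightarrow> 'a set \<Rightarrow> (nat \<Rightarrow> 'a) \<Rightarrow> nat \<Rightarrow> bool" where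
  "chainX G X x k \<longleftrightarrow> 0 < k \<and> X = x ` {..k} \<and> x k = x 0 \<and>
    (\<forall>j<k. \<exists>e\<in>paths G. dg G e = (0,1) \<and> rg G e = x j \<and> sc G e = x (Suc j)) \<and>
    (\<forall>j<k. \<forall>e\<in>paths G. \<forall>e'\<in>paths G. dg G e = (0,1) \<and> dg G e' = (0,1) \<and>
        rg G e = x j \<and> rg G e' = x j \<longrightarrow> e = e') \<and> X \<subseteq> vertices G"

locale tg = fixes G :: "'a twograph" assumes tg: "is_2graph G"
begin

lemma ax_basic: "l \<in> paths G \<Longrightarrow> rg G l \<in> paths G \<and> sc G l \<in> paths G \<and>
        rg G (rg G l) = rg G l \<and> sc G (rg G l) = rg G l \<and>
        rg G (sc G l) = sc G l \<and> sc G (sc G l) = sc G l \<and>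
        cmp G (rg G l) l = l \<and> cmp G l (sc G l) = l"
  using tg unfolding is_2graph_def by blast

lemma comp: "l \<in> paths G \<Longrightarrow> m \<in> paths G \<Longrightarrow> sc G l = rg G m \<Longrightarrow>
        cmp G l m \<in> paths G \<and> rg G (cmp G l m) = rg G l \<and>
        sc G (cmp G l m) = sc G m \<and> dg G (cmp G l m) = dg G l + dg G m"
  using tg unfolding is_2graph_def by blast

lemma ufac: "l \<in> paths G \<Longrightarrow> dg G l = m + n \<Longrightarrow>
        (\<exists>!p. fst p \<in> paths G \<and> snd p \<in> paths G \<and> dg G (fst p) = m \<and>
               dg G (snd p) = n \<and> sc G (fst p) = rg G (snd p) \<and>
               cmp G (fst p) (snd p) = l)"
  using tg unfolding is_2graph_def by blast

lemma ex1_eq: "\<exists>!x. P x \<Longrightarrow> P a \<Longrightarrow> P b \<Longrightarrow> a = b" by blast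

lemma dg_rg: "l \<in> paths G \<Longrightarrow> dg G (rg G l) = 0"
proof -
  assume l: "l \<in> paths G"
  have "dg G (cmp G (rg G l) l) = dg G (rg G l) + dg G l" using comp[of "rg G l" l] ax_basic[OF l] l by blast
  hence "dg G l = dg G (rg G l) + dg G l" using ax_basic[OF l] by simp
  thus ?thesis by (metis add_cancel_right_left)
qed

lemma dg_sc: "l \<in> paths G \<Longrightarrow> dg G (sc G l) = 0"
proof -
  assume l: "l \<in> paths G"
  have "dg G (cmp G l (sc G l)) = dg G l + dg G (sc G l)" using comp[of l "sc G l"] ax_basic[OF l] l by simp
  hence "dg G l = dg G l + dg G (sc G l)" using ax_basic[OF l] by simp
  thus ?thesis by (metis add_cancel_left_right)
qed

lemma vert_id: "v \<in> paths G \<Longrightarrow> dg G v = 0 \<Longrightarrow> rg G v = v \<and> sc G v = v"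
proof -
  assume v: "v \<in> paths G" and d: "dg G v = 0"
  have u: "\<exists>!p. fst p \<in> paths G \<and> snd p \<in> paths G \<and> dg G (fst p) = 0 \<and>
               dg G (snd p) = 0 \<and> sc G (fst p) = rg G (snd p) \<and>
               cmp G (fst p) (snd p) = v" using ufac[OF v, of 0 0] d by simp
  have "(rg G v, v) = (v, sc G v)"
    apply (rule ex1_eq[OF u])
    using v ax_basic[OF v] dg_rg[OF v] dg_sc[OF v] d by auto
  thus ?thesis by simp
qed

lemma fact_ex: "l \<in> paths G \<Longrightarrow> m \<le> dg G l \<Longrightarrow> \<exists>a b. a \<in> paths G \<and> b \<in> paths G \<and>
   dg G a = m \<and> dg G b = dg G l - m \<and> sc G a = rg G b \<and> cmp G a b = l"
proof -
  assume l: "l \<in> paths G" and m: "m \<le> dg G l"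
  have "dg G l = m + (dg G l - m)" using m
    by (simp add: prod_eq_iff less_eq_prod_def)
  from ex1_implies_ex[OF ufac[OF l this]] show ?thesis by blast
qed

lemma fact_uniq: "a \<in> paths G \<Longrightarrow> b \<in> paths G \<Longrightarrow> a' \<in> paths G \<Longrightarrow> b' \<in> paths G \<Longrightarrow>
  sc G a = rg G b \<Longrightarrow> sc G a' = rg G b' \<Longrightarrow> dg G a = dg G a' \<Longrightarrow> cmp G a b = cmp G a' b' \<Longrightarrow>
  a = a' \<and> b = b'"
proof -
  assume h: "a \<in> paths G" "b \<in> paths G" "a' \<in> paths G" "b' \<in> paths G"
    "sc G a = rg G b" "sc G a' = rg G b'" "dg G a = dg G a'" "cmp G a b = cmp G a' b'"
  let ?l = "cmp G a b"
  have l: "?l \<in> paths G" and dl: "dg G ?l = dg G a + dg G b" using comp[of a b] h by auto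
  have "dg G ?l = dg G a' + dg G b'" using comp[of a' b'] h by auto
  hence db: "dg G b' = dg G b" using dl h(7) by simp
  have "(a, b) = (a', b')"
    apply (rule ex1_eq[OF ufac[OF l dl]])
    using h db by auto
  thus ?thesis by simp
qed

lemma swap: "a \<in> paths G \<Longrightarrow> b \<in> paths G \<Longrightarrow> sc G a = rg G b \<Longrightarrow>
  \<exists>a' b'. a' \<in> paths G \<and> b' \<in> paths G \<and> dg G a' = dg G b \<and> dg G b' = dg G a \<and>
    sc G a' = rg G b' \<and> cmp G a' b' = cmp G a b \<and> rg G a' = rg G a \<and> sc G b' = sc G b"
proof -
  assume h: "a \<in> paths G" "b \<in> paths G" "sc G a = rg G b"
  let ?l = "cmp G a b"
  have l: "?l \<in> paths G" and dl: "dg G ?l = dg G b + dg G a"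
    and r: "rg G ?l = rg G a" and s: "sc G ?l = sc G b" using comp[of a b] h by (auto simp: add.commute)
  from ex1_implies_ex[OF ufac[OF l dl]] obtain p where p: "fst p \<in> paths G \<and> snd p \<in> paths G \<and> dg G (fst p) = dg G b \<and>
               dg G (snd p) = dg G a \<and> sc G (fst p) = rg G (snd p) \<and>
               cmp G (fst p) (snd p) = ?l" by blast
  have "rg G (fst p) = rg G a" "sc G (snd p) = sc G b" using comp[of "fst p" "snd p"] p r s by auto
  thus ?thesis using p by blast
qed

lemma cycle_chain:
  assumes cyc: "is_cycle G l" and iso: "isolated G l" and red: "red_path G l"
  shows "\<exists>x k. chainX G (cycle_vertices G l) x k"
proof -
  have lp: "l \<in> paths G" using cyc unfolding is_cycle_def by (rule conjunct1)
  define k where "k = snd (dg G l)"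
  have dl: "dg G l = (0,k)" using red unfolding red_path_def k_def by (metis prod.collapse)
  have "dg G l \<noteq> 0" using cyc unfolding is_cycle_def by simp
  hence kpos: "0 < k" using dl by (auto simp: zero_prod_def)
  have rs: "rg G l = sc G l" using cyc unfolding is_cycle_def by simp
  have iso1: "\<not> (\<exists>n \<le> dg G l. {x \<in> paths G. rg G x = rg G l \<and> dg G x = n} - {seg G l 0 n} \<noteq> {})"
    using iso unfolding isolated_def by (rule conjunct1)
  have isoP: "y = seg G l 0 n" if h: "n \<le> dg G l" "y \<in> paths G" "rg G y = rg G l" "dg G y = n" for n y
  proof (rule ccontr)
    assume "y \<noteq> seg G l 0 n"
    hence "y \<in> {x \<in> paths G. rg G x = rg G l \<and> dg G x = n} - {seg G l 0 n}" using h by simp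
    hence "\<exists>n \<le> dg G l. {x \<in> paths G. rg G x = rg G l \<and> dg G x = n} - {seg G l 0 n} \<noteq> {}" using h(1) by blast
    thus False using iso1 by blast
  qed
  have isoU: "y = z" if "y \<in> paths G" "z \<in> paths G" "rg G y = rg G l" "rg G z = rg G l"
     "dg G y = dg G z" "dg G z \<le> dg G l" for y z
  proof -
    have "y = seg G l 0 (dg G z)" using isoP[of "dg G z" y] that by simp
    moreover have "z = seg G l 0 (dg G z)" using isoP[of "dg G z" z] that by simp
    ultimately show ?thesis by simp
  qed
  have le: "(0,j) \<le> dg G l" if "j \<le> k" for j using that dl by (simp add: less_eq_prod_def)
  have "\<forall>j. \<exists>p. j \<le> k \<longrightarrow> fst p \<in> paths G \<and> snd p \<in> paths G \<and> dg G (fst p) = (0,j) \<and>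
     dg G (snd p) = dg G l - (0,j) \<and> sc G (fst p) = rg G (snd p) \<and> cmp G (fst p) (snd p) = l"
  proof (intro allI)
    fix j show "\<exists>p. j \<le> k \<longrightarrow> fst p \<in> paths G \<and> snd p \<in> paths G \<and> dg G (fst p) = (0,j) \<and>
     dg G (snd p) = dg G l - (0,j) \<and> sc G (fst p) = rg G (snd p) \<and> cmp G (fst p) (snd p) = l"
    proof (cases "j \<le> k")
      case True
      then obtain a b where "a \<in> paths G \<and> b \<in> paths G \<and>
   dg G a = (0,j) \<and> dg G b = dg G l - (0,j) \<and> sc G a = rg G b \<and> cmp G a b = l"
        using fact_ex[OF lp le[OF True]] by blast
      then show ?thesis by (intro exI[of _ "(a,b)"]) simp
    qed simp
  qed
  from choice[OF this] obtain F where F0: "\<forall>j. j \<le> k \<longrightarrow> fst (F j) \<in> paths G \<and> snd (F j) \<in> paths G \<and> dg G (fst (F j)) = (0,j) \<and>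
     dg G (snd (F j)) = dg G l - (0,j) \<and> sc G (fst (F j)) = rg G (snd (F j)) \<and> cmp G (fst (F j)) (snd (F j)) = l"
    by blast
  have F: "fst (F j) \<in> paths G \<and> snd (F j) \<in> paths G \<and> dg G (fst (F j)) = (0,j) \<and>
     dg G (snd (F j)) = dg G l - (0,j) \<and> sc G (fst (F j)) = rg G (snd (F j)) \<and> cmp G (fst (F j)) (snd (F j)) = l"
    if "j \<le> k" for j using F0 that by blast
  define A where "A j = fst (F j)" for j
  define B where "B j = snd (F j)" for j
  have AB: "A j \<in> paths G" "B j \<in> paths G" "dg G (A j) = (0,j)" "dg G (B j) = dg G l - (0,j)"
    "sc G (A j) = rg G (B j)" "cmp G (A j) (B j) = l" if "j \<le> k" for j
    using F[OF that] unfolding A_def B_def by auto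
  have rA: "rg G (A j) = rg G l" if "j \<le> k" for j
  proof -
    have "rg G (cmp G (A j) (B j)) = rg G (A j)" using comp[of "A j" "B j"] AB[OF that] by blast
    thus ?thesis using AB(6)[OF that] by simp
  qed
  define x where "x j = sc G (A j)" for j
  have segx: "seg G l (0,j) (0,j) = x j" if j: "j \<le> k" for j
    unfolding seg_def
  proof (rule the_equality)
    show "\<exists>a b. a \<in> paths G \<and> x j \<in> paths G \<and> b \<in> paths G \<and> dg G a = (0, j) \<and>
          dg G (x j) = (0, j) - (0, j) \<and> sc G a = rg G (x j) \<and> sc G (x j) = rg G b \<and>
          l = cmp G (cmp G a (x j)) b"
      apply (rule exI[of _ "A j"], rule exI[of _ "B j"])
    proof (intro conjI)
      have a: "A j \<in> paths G" using AB(1)[OF j] .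
      note ab = ax_basic[OF a]
      show "A j \<in> paths G" by fact
      show "x j \<in> paths G" unfolding x_def using ab by simp
      show "B j \<in> paths G" using AB(2)[OF j] .
      show "dg G (A j) = (0, j)" using AB(3)[OF j] .
      show "dg G (x j) = (0, j) - (0, j)" unfolding x_def using dg_sc[OF a] by (simp add: zero_prod_def)
      show "sc G (A j) = rg G (x j)" unfolding x_def using ab by simp
      show "sc G (x j) = rg G (B j)" unfolding x_def using ab AB(5)[OF j] by simp
      show "l = cmp G (cmp G (A j) (x j)) (B j)" unfolding x_def using ab AB(6)[OF j] by simp
    qed
  next
    fix u assume "\<exists>a b. a \<in> paths G \<and> u \<in> paths G \<and> b \<in> paths G \<and> dg G a = (0, j) \<and>
          dg G u = (0, j) - (0, j) \<and> sc G a = rg G u \<and> sc G u = rg G b \<and>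
          l = cmp G (cmp G a u) b"
    then obtain a b where h: "a \<in> paths G" "u \<in> paths G" "b \<in> paths G" "dg G a = (0, j)"
          "dg G u = (0, j) - (0, j)" "sc G a = rg G u" "sc G u = rg G b" "l = cmp G (cmp G a u) b"
      by blast
    have du: "dg G u = 0" using h(5) by (simp add: zero_prod_def)
    have uu: "rg G u = u" "sc G u = u" using vert_id[OF h(2) du] by auto
    have sa: "sc G a = u" using h(6) uu(1) by simp
    have "cmp G a (sc G a) = a" using ax_basic[OF h(1)] by blast
    hence au: "cmp G a u = a" using sa by simp
    have lab: "l = cmp G a b" using h(8) au by simp
    have sb: "sc G a = rg G b" using sa uu(2) h(7) by simp
    have e1: "dg G a = dg G (A j)" using h(4) AB(3)[OF j] by simp
    have e2: "cmp G a b = cmp G (A j) (B j)" using lab AB(6)[OF j] by simp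
    from fact_uniq[OF h(1) h(3) AB(1)[OF j] AB(2)[OF j] sb AB(5)[OF j] e1 e2] have "a = A j" by blast
    thus "u = x j" using sa unfolding x_def by simp
  qed
  have cv: "cycle_vertices G l = x ` {..k}"
  proof -
    have "cycle_vertices G l = (\<lambda>j. seg G l (0,j) (0,j)) ` {..k}"
    proof (intro set_eqI iffI)
      fix v assume "v \<in> cycle_vertices G l"
      then obtain m where m: "v = seg G l m m" "m \<le> dg G l" unfolding cycle_vertices_def by blast
      have f0: "fst m = 0" and sk: "snd m \<le> k" using m(2) dl by (simp_all add: less_eq_prod_def)
      have "m = (0, snd m)" using f0 by (cases m) simp
      hence "v = seg G l (0, snd m) (0, snd m)" using m(1) by simp
      thus "v \<in> (\<lambda>j. seg G l (0,j) (0,j)) ` {..k}" using sk by (intro image_eqI[where x="snd m"]) auto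
    next
      fix v assume "v \<in> (\<lambda>j. seg G l (0,j) (0,j)) ` {..k}"
      then obtain j where "j \<le> k" "v = seg G l (0,j) (0,j)" by auto
      thus "v \<in> cycle_vertices G l" using le unfolding cycle_vertices_def by blast
    qed
    also have "... = x ` {..k}" using segx by auto
    finally show ?thesis .
  qed
  have x0: "x 0 = rg G l"
  proof -
    have "dg G (A 0) = 0" using AB(3)[of 0] by (simp add: zero_prod_def)
    thus ?thesis using vert_id[of "A 0"] AB(1)[of 0] rA[of 0] unfolding x_def by simp
  qed
  have xk: "x k = x 0"
  proof -
    have "dg G (B k) = 0" using AB(4)[of k] dl by (simp add: zero_prod_def)
    hence "rg G (B k) = B k" using vert_id[of "B k"] AB(2)[of k] by simp
    hence "l = A k" using AB(5,6)[of k] ax_basic[of "A k"] AB(1)[of k] by simp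
    thus ?thesis using x0 rs unfolding x_def by simp
  qed
  have edge: "\<exists>e\<in>paths G. dg G e = (0,1) \<and> rg G e = x j \<and> sc G e = x (Suc j)" if j: "j < k" for j
  proof -
    have "(0,j) \<le> dg G (A (Suc j))" using AB(3)[of "Suc j"] j by (simp add: less_eq_prod_def)
    then obtain a e where ae: "a \<in> paths G" "e \<in> paths G" "dg G a = (0,j)"
      "dg G e = dg G (A (Suc j)) - (0,j)" "sc G a = rg G e" "cmp G a e = A (Suc j)"
      using fact_ex[of "A (Suc j)" "(0,j)"] AB(1)[of "Suc j"] j by auto
    have de: "dg G e = (0,1)" using ae(4) AB(3)[of "Suc j"] j by simp
    have "rg G a = rg G l" using comp[of a e] ae rA[of "Suc j"] j by simp
    hence "a = A j" using isoU[of a "A j"] ae AB[of j] rA[of j] j le[of j] by simp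
    moreover have "sc G e = x (Suc j)" unfolding x_def using comp[of a e] ae by simp
    ultimately show ?thesis using ae de unfolding x_def by auto
  qed
  have uniq: "e = e'" if j: "j < k" and e: "e \<in> paths G" "e' \<in> paths G" "dg G e = (0,1)" "dg G e' = (0,1)"
      "rg G e = x j" "rg G e' = x j" for j e e'
  proof -
    have j': "j \<le> k" "Suc j \<le> k" using j by auto
    have cf: "cmp G (A j) f = A (Suc j)" if f: "f \<in> paths G" "dg G f = (0,1)" "rg G f = x j" for f
    proof -
      have sA: "sc G (A j) = rg G f" using f(3) unfolding x_def by simp
      have c: "cmp G (A j) f \<in> paths G \<and> rg G (cmp G (A j) f) = rg G (A j) \<and>
        sc G (cmp G (A j) f) = sc G f \<and> dg G (cmp G (A j) f) = dg G (A j) + dg G f"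
        using comp[OF AB(1)[OF j'(1)] f(1) sA] .
      have d: "dg G (cmp G (A j) f) = dg G (A (Suc j))"
        using c AB(3)[OF j'(1)] AB(3)[OF j'(2)] f(2) by simp
      have r: "rg G (cmp G (A j) f) = rg G l" using c rA[OF j'(1)] by simp
      have dl2: "dg G (A (Suc j)) \<le> dg G l" using AB(3)[OF j'(2)] le[OF j'(2)] by simp
      show ?thesis by (rule isoU[OF conjunct1[OF c] AB(1)[OF j'(2)] r rA[OF j'(2)] d dl2])
    qed
    have eq: "cmp G (A j) e = cmp G (A j) e'" using cf[OF e(1) e(3) e(5)] cf[OF e(2) e(4) e(6)] by simp
    have s1: "sc G (A j) = rg G e" using e(5) unfolding x_def by simp
    have s2: "sc G (A j) = rg G e'" using e(6) unfolding x_def by simp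
    from fact_uniq[OF AB(1)[OF j'(1)] e(1) AB(1)[OF j'(1)] e(2) s1 s2 refl eq] show ?thesis by blast
  qed
  have vs: "x ` {..k} \<subseteq> vertices G"
  proof
    fix v assume "v \<in> x ` {..k}"
    then obtain j where j: "j \<le> k" "v = x j" by auto
    have a: "A j \<in> paths G" using AB(1)[OF j(1)] .
    show "v \<in> vertices G" unfolding vertices_def x_def j(2) using ax_basic[OF a] dg_sc[OF a] by simp
  qed
  show ?thesis
    apply (rule exI[of _ x], rule exI[of _ k])
    unfolding chainX_def cv
    apply (intro conjI)
         apply (rule kpos)
        apply (rule refl)
       apply (rule xk)
      apply (intro allI impI)
      apply (erule edge)
     apply (intro allI impI ballI)
     apply (elim conjE)
     apply (rule uniq; assumption)
    apply (rule vs)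
    done
qed


definition out :: "'a \<Rightarrow> 'a" where
  "out v = (THE e. e \<in> paths G \<and> dg G e = (0,1) \<and> rg G e = v)"

definition sg :: "'a \<Rightarrow> 'a" where
  "sg v = sc G (out v)"

lemma chain_mem: "chainX G X x k \<Longrightarrow> v \<in> X \<Longrightarrow> \<exists>j<k. v = x j"
proof -
  assume c: "chainX G X x k" and v: "v \<in> X"
  have k: "0 < k" "X = x ` {..k}" "x k = x 0" using c unfolding chainX_def by auto
  then obtain j where j: "j \<le> k" "v = x j" using v by auto
  show ?thesis
  proof (cases "j = k")
    case True thus ?thesis using j k by auto
  next
    case False thus ?thesis using j by (intro exI[of _ j]) auto
  qed
qed

lemma chain_out0:
  assumes c: "chainX G X x k" and v: "v \<in> X"
  shows "out v \<in> paths G \<and> dg G (out v) = (0,1) \<and> rg G (out v) = v \<and> sg v \<in> X \<and>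
    (\<forall>e\<in>paths G. dg G e = (0,1) \<and> rg G e = v \<longrightarrow> e = out v)"
proof -
  obtain j where j: "j < k" "v = x j" using chain_mem[OF c v] by blast
  have X: "X = x ` {..k}" using c unfolding chainX_def by blast
  have ed: "\<forall>j<k. \<exists>e\<in>paths G. dg G e = (0,1) \<and> rg G e = x j \<and> sc G e = x (Suc j)"
    using c unfolding chainX_def by blast
  have un: "\<forall>j<k. \<forall>e\<in>paths G. \<forall>e'\<in>paths G. dg G e = (0,1) \<and> dg G e' = (0,1) \<and>
        rg G e = x j \<and> rg G e' = x j \<longrightarrow> e = e'"
    using c unfolding chainX_def by blast
  obtain e0 where e0: "e0 \<in> paths G" "dg G e0 = (0,1)" "rg G e0 = x j" "sc G e0 = x (Suc j)"
    using ed j(1) by blast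
  have u: "e = e0" if "e \<in> paths G" "dg G e = (0,1)" "rg G e = v" for e
    using un j that e0 by blast
  have re0: "rg G e0 = v" using e0(3) j(2) by simp
  have o: "out v = e0" unfolding out_def
  proof (rule the_equality)
    show "e0 \<in> paths G \<and> dg G e0 = (0,1) \<and> rg G e0 = v" using e0(1,2) re0 by blast
    fix e assume "e \<in> paths G \<and> dg G e = (0,1) \<and> rg G e = v" thus "e = e0" using u by blast
  qed
  have sgX: "sg v \<in> X" unfolding sg_def o e0(4) X using j(1) by auto
  have all: "\<forall>e\<in>paths G. dg G e = (0,1) \<and> rg G e = v \<longrightarrow> e = out v" using u o by blast
  show ?thesis unfolding o using e0(1,2) re0 sgX all unfolding o by blast
qed

lemma chain_out:
  assumes c: "chainX G X x k" and v: "v \<in> X"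
  shows "out v \<in> paths G \<and> dg G (out v) = (0,1) \<and> rg G (out v) = v \<and> sg v \<in> X"
  using chain_out0[OF c v] by blast

lemma chain_uniq:
  assumes c: "chainX G X x k" and v: "v \<in> X"
  shows "e \<in> paths G \<Longrightarrow> dg G e = (0,1) \<Longrightarrow> rg G e = v \<Longrightarrow> e = out v"
  using chain_out0[OF c v] by blast

lemma chain_sg: "chainX G X x k \<Longrightarrow> j < k \<Longrightarrow> sg (x j) = x (Suc j)"
proof -
  assume c: "chainX G X x k" and j: "j < k"
  have X: "X = x ` {..k}" using c unfolding chainX_def by blast
  have v: "x j \<in> X" using X j by auto
  have ed: "\<forall>j<k. \<exists>e\<in>paths G. dg G e = (0,1) \<and> rg G e = x j \<and> sc G e = x (Suc j)"
    using c unfolding chainX_def by blast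
  obtain e0 where e0: "e0 \<in> paths G" "dg G e0 = (0,1)" "rg G e0 = x j" "sc G e0 = x (Suc j)"
    using ed j by blast
  have "e0 = out (x j)" using chain_uniq[OF c v e0(1,2,3)] .
  thus ?thesis unfolding sg_def using e0 by simp
qed

lemma chain_surj: "chainX G X x k \<Longrightarrow> X \<subseteq> sg ` X"
proof
  fix v assume c: "chainX G X x k" and v: "v \<in> X"
  have k: "0 < k" "X = x ` {..k}" "x k = x 0" using c unfolding chainX_def by auto
  then obtain j where j: "j \<le> k" "v = x j" using v by auto
  show "v \<in> sg ` X"
  proof (cases j)
    case 0
    have "sg (x (k - 1)) = x k" using chain_sg[OF c, of "k - 1"] k by simp
    moreover have "x (k - 1) \<in> X" using k by auto
    ultimately show ?thesis using j k 0 by (metis image_eqI)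
  next
    case (Suc i)
    have "sg (x i) = x j" using chain_sg[OF c, of i] j Suc by simp
    moreover have "x i \<in> X" using k j Suc by auto
    ultimately show ?thesis using j by (metis image_eqI)
  qed
qed

lemma chain_fin: "chainX G X x k \<Longrightarrow> finite X"
  unfolding chainX_def by auto

lemma chain_vert: "chainX G X x k \<Longrightarrow> X \<subseteq> vertices G"
  unfolding chainX_def by auto

lemma chain_inj: "chainX G X x k \<Longrightarrow> inj_on sg X"
  by (rule finite_surj_inj[OF chain_fin chain_surj])

lemma chain_const:
  assumes c: "chainX G X x k" and m: "\<forall>v\<in>X. f v \<le> (f (sg v) :: nat)" and v: "v \<in> X"
  shows "f v = f (x 0)"
proof -
  have k: "0 < k" "X = x ` {..k}" "x k = x 0" using c unfolding chainX_def by auto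
  have st: "f (x j) \<le> f (x (Suc j))" if "j < k" for j
    using m chain_sg[OF c that] k that by (metis atMost_iff image_eqI less_imp_le_nat)
  have mono: "f (x i) \<le> f (x j)" if "i \<le> j" "j \<le> k" for i j
    using that
  proof (induction j)
    case 0 thus ?case by simp
  next
    case (Suc j)
    show ?case
    proof (cases "i = Suc j")
      case True thus ?thesis by simp
    next
      case False
      hence "f (x i) \<le> f (x j)" using Suc by simp
      also have "\<dots> \<le> f (x (Suc j))" using st Suc by simp
      finally show ?thesis .
    qed
  qed
  obtain j where j: "j \<le> k" "v = x j" using v k by auto
  have "f (x 0) \<le> f (x j)" "f (x j) \<le> f (x k)" using mono j by auto
  thus ?thesis using j k by simp
qed

lemma fin_blue:
  assumes rf: "row_finite G" and X: "finite X" "X \<subseteq> vertices G"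
  shows "finite (blue_edges G X Y)"
proof -
  have "blue_edges G X Y \<subseteq> (\<Union>v\<in>X. {l \<in> paths G. rg G l = v \<and> dg G l = (1,0)})"
    unfolding blue_edges_def by auto
  moreover have "finite (\<Union>v\<in>X. {l \<in> paths G. rg G l = v \<and> dg G l = (1,0)})"
    using rf X unfolding row_finite_def by blast
  ultimately show ?thesis by (rule finite_subset)
qed

lemma A_step:
  assumes cX: "chainX G X x k" and cY: "chainX G Y y k'" and rf: "row_finite G" and v: "v \<in> X"
  shows "card (blue_edges G {v} Y) \<le> card (blue_edges G {sg v} Y)"
proof -
  define P where "P e e' \<longleftrightarrow> (\<exists>f. f \<in> paths G \<and> e' \<in> paths G \<and> dg G f = (0,1) \<and> dg G e' = (1,0) \<and>
     sc G f = rg G e' \<and> cmp G f e' = cmp G e (out (sc G e)) \<and> rg G f = rg G e \<and> sc G e' = sc G (out (sc G e)))" for e e'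
  define phi where "phi e = (SOME e'. P e e')" for e
  have ex: "P e (phi e)" if e: "e \<in> blue_edges G {v} Y" for e
  proof -
    have e1: "e \<in> paths G" "dg G e = (1,0)" "rg G e = v" "sc G e \<in> Y" using e unfolding blue_edges_def by auto
    note g = chain_out[OF cY e1(4)]
    obtain a' b' where ab: "a' \<in> paths G \<and> b' \<in> paths G \<and> dg G a' = dg G (out (sc G e)) \<and> dg G b' = dg G e \<and>
      sc G a' = rg G b' \<and> cmp G a' b' = cmp G e (out (sc G e)) \<and> rg G a' = rg G e \<and> sc G b' = sc G (out (sc G e))"
      using swap[of e "out (sc G e)"] e1 g by auto
    have "P e b'" unfolding P_def using ab g e1 by auto
    thus ?thesis unfolding phi_def by (rule someI)
  qed
  have outv: "\<forall>e\<in>paths G. dg G e = (0,1) \<and> rg G e = v \<longrightarrow> e = out v" using chain_uniq[OF cX v] by blast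
  have img: "phi ` blue_edges G {v} Y \<subseteq> blue_edges G {sg v} Y"
  proof
    fix e' assume "e' \<in> phi ` blue_edges G {v} Y"
    then obtain e where e: "e \<in> blue_edges G {v} Y" "e' = phi e" by blast
    have e1: "e \<in> paths G" "dg G e = (1,0)" "rg G e = v" "sc G e \<in> Y" using e unfolding blue_edges_def by auto
    obtain f where f: "f \<in> paths G" "e' \<in> paths G" "dg G f = (0,1)" "dg G e' = (1,0)"
      "sc G f = rg G e'" "rg G f = rg G e" "sc G e' = sc G (out (sc G e))"
      using ex[OF e(1)] e(2) unfolding P_def by blast
    have "f = out v" using f(3,6) e1(3) by (intro outv[rule_format, OF f(1)]) simp
    hence "rg G e' = sg v" using f(5) unfolding sg_def by simp
    moreover have "sc G e' \<in> Y" using f(7) chain_out[OF cY e1(4)] unfolding sg_def by simp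
    ultimately show "e' \<in> blue_edges G {sg v} Y" unfolding blue_edges_def using f by auto
  qed
  have inj: "inj_on phi (blue_edges G {v} Y)"
  proof (rule inj_onI)
    fix e1 e2 assume h: "e1 \<in> blue_edges G {v} Y" "e2 \<in> blue_edges G {v} Y" "phi e1 = phi e2"
    have a1: "e1 \<in> paths G" "dg G e1 = (1,0)" "rg G e1 = v" "sc G e1 \<in> Y" using h(1) unfolding blue_edges_def by auto
    have a2: "e2 \<in> paths G" "dg G e2 = (1,0)" "rg G e2 = v" "sc G e2 \<in> Y" using h(2) unfolding blue_edges_def by auto
    obtain f1 where f1: "f1 \<in> paths G" "dg G f1 = (0,1)" "cmp G f1 (phi e1) = cmp G e1 (out (sc G e1))" "rg G f1 = rg G e1"
      using ex[OF h(1)] unfolding P_def by blast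
    obtain f2 where f2: "f2 \<in> paths G" "dg G f2 = (0,1)" "cmp G f2 (phi e2) = cmp G e2 (out (sc G e2))" "rg G f2 = rg G e2"
      using ex[OF h(2)] unfolding P_def by blast
    have "f1 = out v" using f1(2,4) a1(3) by (intro outv[rule_format, OF f1(1)]) simp
    moreover have "f2 = out v" using f2(2,4) a2(3) by (intro outv[rule_format, OF f2(1)]) simp
    ultimately have "f1 = out v" "f2 = out v" by auto
    hence eq: "cmp G e1 (out (sc G e1)) = cmp G e2 (out (sc G e2))" using f1(3) f2(3) h(3) by simp
    note g1 = chain_out[OF cY a1(4)] and g2 = chain_out[OF cY a2(4)]
    have s1: "sc G e1 = rg G (out (sc G e1))" using g1 by simp
    have s2: "sc G e2 = rg G (out (sc G e2))" using g2 by simp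
    have d: "dg G e1 = dg G e2" using a1 a2 by simp
    show "e1 = e2" using fact_uniq[OF a1(1) _ a2(1) _ s1 s2 d eq] g1 g2 by blast
  qed
  have fin: "finite (blue_edges G {sg v} Y)"
    using fin_blue[OF rf] chain_out[OF cX v] chain_vert[OF cX] by auto
  show ?thesis by (rule card_inj_on_le[OF inj img fin])
qed

lemma B_step:
  assumes cX: "chainX G X x k" and cY: "chainX G Y y k'" and rf: "row_finite G" and w: "w \<in> Y"
  shows "card (blue_edges G X {w}) \<le> card (blue_edges G X {sg w})"
proof -
  note g = chain_out[OF cY w]
  define P where "P e' e \<longleftrightarrow> (\<exists>f. f \<in> paths G \<and> e \<in> paths G \<and> dg G e = (1,0) \<and> dg G f = (0,1) \<and>
     sc G f = rg G e \<and> cmp G f e = cmp G e' (out w) \<and> rg G f = rg G e' \<and> sc G e = sc G (out w))" for e' e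
  define psi where "psi e' = (SOME e. P e' e)" for e'
  have ex: "P e' (psi e')" if e: "e' \<in> blue_edges G X {w}" for e'
  proof -
    have e1: "e' \<in> paths G" "dg G e' = (1,0)" "rg G e' \<in> X" "sc G e' = w" using e unfolding blue_edges_def by auto
    obtain a' b' where ab: "a' \<in> paths G \<and> b' \<in> paths G \<and> dg G a' = dg G (out w) \<and> dg G b' = dg G e' \<and>
      sc G a' = rg G b' \<and> cmp G a' b' = cmp G e' (out w) \<and> rg G a' = rg G e' \<and> sc G b' = sc G (out w)"
      using swap[of e' "out w"] e1 g by auto
    have "P e' b'" unfolding P_def using ab g e1 by auto
    thus ?thesis unfolding psi_def by (rule someI)
  qed
  have fo: "f = out (rg G e')" "sc G f \<in> X" "sc G f = sg (rg G e')"
    if "e' \<in> blue_edges G X {w}" "f \<in> paths G" "dg G f = (0,1)" "rg G f = rg G e'" for e' f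
  proof -
    have r: "rg G e' \<in> X" using that(1) unfolding blue_edges_def by auto
    show "f = out (rg G e')" using chain_uniq[OF cX r that(2,3,4)] .
    thus "sc G f = sg (rg G e')" unfolding sg_def by simp
    thus "sc G f \<in> X" using chain_out[OF cX r] by simp
  qed
  have img: "psi ` blue_edges G X {w} \<subseteq> blue_edges G X {sg w}"
  proof
    fix e assume "e \<in> psi ` blue_edges G X {w}"
    then obtain e' where e: "e' \<in> blue_edges G X {w}" "e = psi e'" by blast
    obtain f where f: "f \<in> paths G" "e \<in> paths G" "dg G e = (1,0)" "dg G f = (0,1)"
      "sc G f = rg G e" "rg G f = rg G e'" "sc G e = sc G (out w)"
      using ex[OF e(1)] e(2) unfolding P_def by blast
    have "rg G e \<in> X" using fo(2)[OF e(1) f(1) f(4) f(6)] f(5) by simp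
    moreover have "sc G e = sg w" using f(7) unfolding sg_def by simp
    ultimately show "e \<in> blue_edges G X {sg w}" unfolding blue_edges_def using f by auto
  qed
  have inj: "inj_on psi (blue_edges G X {w})"
  proof (rule inj_onI)
    fix e1 e2 assume h: "e1 \<in> blue_edges G X {w}" "e2 \<in> blue_edges G X {w}" "psi e1 = psi e2"
    have a1: "e1 \<in> paths G" "dg G e1 = (1,0)" "rg G e1 \<in> X" "sc G e1 = w" using h(1) unfolding blue_edges_def by auto
    have a2: "e2 \<in> paths G" "dg G e2 = (1,0)" "rg G e2 \<in> X" "sc G e2 = w" using h(2) unfolding blue_edges_def by auto
    obtain f1 where f1: "f1 \<in> paths G" "dg G f1 = (0,1)" "sc G f1 = rg G (psi e1)" "cmp G f1 (psi e1) = cmp G e1 (out w)" "rg G f1 = rg G e1"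
      using ex[OF h(1)] unfolding P_def by blast
    obtain f2 where f2: "f2 \<in> paths G" "dg G f2 = (0,1)" "sc G f2 = rg G (psi e2)" "cmp G f2 (psi e2) = cmp G e2 (out w)" "rg G f2 = rg G e2"
      using ex[OF h(2)] unfolding P_def by blast
    have "sg (rg G e1) = sg (rg G e2)"
      using fo(3)[OF h(1) f1(1) f1(2) f1(5)] fo(3)[OF h(2) f2(1) f2(2) f2(5)] f1(3) f2(3) h(3) by simp
    hence "rg G e1 = rg G e2" using chain_inj[OF cX] a1(3) a2(3) by (meson inj_onD)
    hence "f1 = f2" using fo(1)[OF h(1) f1(1) f1(2) f1(5)] fo(1)[OF h(2) f2(1) f2(2) f2(5)] by simp
    hence eq: "cmp G e1 (out w) = cmp G e2 (out w)" using f1(4) f2(4) h(3) by simp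
    have s1: "sc G e1 = rg G (out w)" using g a1 by simp
    have s2: "sc G e2 = rg G (out w)" using g a2 by simp
    have d: "dg G e1 = dg G e2" using a1 a2 by simp
    show "e1 = e2" using fact_uniq[OF a1(1) _ a2(1) _ s1 s2 d eq] g by blast
  qed
  have fin: "finite (blue_edges G X {sg w})"
    using fin_blue[OF rf chain_fin[OF cX] chain_vert[OF cX]] .
  show ?thesis by (rule card_inj_on_le[OF inj img fin])
qed

lemma card_rows:
  assumes cX: "chainX G X x k" and rf: "row_finite G"
  shows "card (blue_edges G X Y) = (\<Sum>v\<in>X. card (blue_edges G {v} Y))"
proof -
  have "blue_edges G X Y = (\<Union>v\<in>X. blue_edges G {v} Y)" unfolding blue_edges_def by auto
  moreover have "card (\<Union>v\<in>X. blue_edges G {v} Y) = (\<Sum>v\<in>X. card (blue_edges G {v} Y))"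
  proof (rule card_UN_disjoint)
    show "finite X" by (rule chain_fin[OF cX])
    show "\<forall>v\<in>X. finite (blue_edges G {v} Y)" using fin_blue[OF rf] chain_vert[OF cX] by auto
    show "\<forall>i\<in>X. \<forall>j\<in>X. i \<noteq> j \<longrightarrow> blue_edges G {i} Y \<inter> blue_edges G {j} Y = {}"
      unfolding blue_edges_def by auto
  qed
  ultimately show ?thesis by simp
qed

lemma card_cols:
  assumes cX: "chainX G X x k" and cY: "chainX G Y y k'" and rf: "row_finite G"
  shows "card (blue_edges G X Y) = (\<Sum>w\<in>Y. card (blue_edges G X {w}))"
proof -
  have "blue_edges G X Y = (\<Union>w\<in>Y. blue_edges G X {w})" unfolding blue_edges_def by auto
  moreover have "card (\<Union>w\<in>Y. blue_edges G X {w}) = (\<Sum>w\<in>Y. card (blue_edges G X {w}))"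
  proof (rule card_UN_disjoint)
    show "finite Y" by (rule chain_fin[OF cY])
    show "\<forall>v\<in>Y. finite (blue_edges G X {v})" using fin_blue[OF rf chain_fin[OF cX] chain_vert[OF cX]] by auto
    show "\<forall>i\<in>Y. \<forall>j\<in>Y. i \<noteq> j \<longrightarrow> blue_edges G X {i} \<inter> blue_edges G X {j} = {}"
      unfolding blue_edges_def by auto
  qed
  ultimately show ?thesis by simp
qed

lemma matrices:
  assumes cX: "chainX G X x k" and cY: "chainX G Y y k'" and rf: "row_finite G"
  shows "(\<forall>v\<in>X. card (blue_edges G {v} Y) = Amat G Y X) \<and>
        (\<forall>w\<in>Y. card (blue_edges G X {w}) = Bmat G Y X) \<and>
        Amat G Y X * card X = card (blue_edges G X Y) \<and>
        card (blue_edges G X Y) = card Y * Bmat G Y X"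
proof -
  have neX: "\<exists>v. v \<in> X" using cX unfolding chainX_def by auto
  have neY: "\<exists>v. v \<in> Y" using cY unfolding chainX_def by auto
  have cA: "card (blue_edges G {v} Y) = card (blue_edges G {x 0} Y)" if "v \<in> X" for v
    using chain_const[OF cX _ that, of "\<lambda>v. card (blue_edges G {v} Y)"] A_step[OF cX cY rf] by blast
  have A: "\<forall>v\<in>X. card (blue_edges G {v} Y) = Amat G Y X"
    unfolding Amat_def using cA someI_ex[OF neX] by metis
  have cB: "card (blue_edges G X {w}) = card (blue_edges G X {y 0})" if "w \<in> Y" for w
    using chain_const[OF cY _ that, of "\<lambda>w. card (blue_edges G X {w})"] B_step[OF cX cY rf] by blast
  have B: "\<forall>w\<in>Y. card (blue_edges G X {w}) = Bmat G Y X"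
    unfolding Bmat_def using cB someI_ex[OF neY] by metis
  have "card (blue_edges G X Y) = (\<Sum>v\<in>X. Amat G Y X)" using card_rows[OF cX rf] A by simp
  hence 1: "Amat G Y X * card X = card (blue_edges G X Y)" by simp
  have "card (blue_edges G X Y) = (\<Sum>w\<in>Y. Bmat G Y X)" using card_cols[OF cX cY rf] B by simp
  hence 2: "card (blue_edges G X Y) = card Y * Bmat G Y X" by simp
  show ?thesis using A B 1 2 by blast
qed

end

lemma brat_facts:
  assumes "rank2_bratteli G N V"
  shows "is_2graph G" "row_finite G" "\<And>n. enat n \<le> N \<Longrightarrow> finite (V n)"
    "vertices G = (\<Union>n\<in>{n. enat n \<le> N}. V n)"
    "\<And>a b v. enat a \<le> N \<Longrightarrow> enat b \<le> N \<Longrightarrow> v \<in> V a \<Longrightarrow> v \<in> V b \<Longrightarrow> a = b"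
    "\<And>e. e \<in> paths G \<Longrightarrow> dg G e = (1, 0) \<Longrightarrow>
        (\<exists>n. enat (Suc n) \<le> N \<and> rg G e \<in> V n \<and> sc G e \<in> V (Suc n))"
    "\<And>v. v \<in> vertices G \<Longrightarrow> {e \<in> paths G. dg G e = (1, 0) \<and> sc G e = v} = {} \<Longrightarrow> v \<in> V 0"
    "\<And>v. v \<in> vertices G \<Longrightarrow> {e \<in> paths G. dg G e = (1, 0) \<and> rg G e = v} = {} \<Longrightarrow>
        N \<noteq> \<infinity> \<and> v \<in> V (the_enat N)"
    "\<And>v. v \<in> vertices G \<Longrightarrow> \<exists>l. is_cycle G l \<and> isolated G l \<and> red_path G l \<and>
        v \<in> cycle_vertices G l"
    "\<And>e. e \<in> paths G \<Longrightarrow> dg G e = (0, 1) \<Longrightarrow>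
        (\<exists>n. enat n \<le> N \<and> rg G e \<in> V n \<and> sc G e \<in> V n)"
proof -
  note a = assms[unfolded rank2_bratteli_def]
  note p0 = a[THEN conjunct1]
  note p1 = a[THEN conjunct2, THEN conjunct1]
  note p2 = a[THEN conjunct2, THEN conjunct2, THEN conjunct1]
  note p3 = a[THEN conjunct2, THEN conjunct2, THEN conjunct2, THEN conjunct1]
  note p4 = a[THEN conjunct2, THEN conjunct2, THEN conjunct2, THEN conjunct2, THEN conjunct1]
  note p5 = a[THEN conjunct2, THEN conjunct2, THEN conjunct2, THEN conjunct2, THEN conjunct2, THEN conjunct1]
  note p6 = a[THEN conjunct2, THEN conjunct2, THEN conjunct2, THEN conjunct2, THEN conjunct2, THEN conjunct2, THEN conjunct1]
  note p7 = a[THEN conjunct2, THEN conjunct2, THEN conjunct2, THEN conjunct2, THEN conjunct2, THEN conjunct2, THEN conjunct2, THEN conjunct1]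
  note p8 = a[THEN conjunct2, THEN conjunct2, THEN conjunct2, THEN conjunct2, THEN conjunct2, THEN conjunct2, THEN conjunct2, THEN conjunct2, THEN conjunct1]
  note p9 = a[THEN conjunct2, THEN conjunct2, THEN conjunct2, THEN conjunct2, THEN conjunct2, THEN conjunct2, THEN conjunct2, THEN conjunct2, THEN conjunct2]
  show "is_2graph G" by (rule p0)
  show "row_finite G" by (rule p1)
  show "\<And>n. enat n \<le> N \<Longrightarrow> finite (V n)" using p2 by blast
  show "vertices G = (\<Union>n\<in>{n. enat n \<le> N}. V n)" by (rule p3)
  show "\<And>a b v. enat a \<le> N \<Longrightarrow> enat b \<le> N \<Longrightarrow> v \<in> V a \<Longrightarrow> v \<in> V b \<Longrightarrow> a = b"
  proof (rule ccontr)
    fix a b v assume h: "enat a \<le> N" "enat b \<le> N" "v \<in> V a" "v \<in> V b" "a \<noteq> b"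
    hence "V a \<inter> V b = {}" using p4 by blast
    thus False using h by blast
  qed
  show "\<And>e. e \<in> paths G \<Longrightarrow> dg G e = (1, 0) \<Longrightarrow>
        (\<exists>n. enat (Suc n) \<le> N \<and> rg G e \<in> V n \<and> sc G e \<in> V (Suc n))" using p5 by blast
  show "\<And>v. v \<in> vertices G \<Longrightarrow> {e \<in> paths G. dg G e = (1, 0) \<and> sc G e = v} = {} \<Longrightarrow> v \<in> V 0"
    using p6 by blast
  show "\<And>v. v \<in> vertices G \<Longrightarrow> {e \<in> paths G. dg G e = (1, 0) \<and> rg G e = v} = {} \<Longrightarrow>
        N \<noteq> \<infinity> \<and> v \<in> V (the_enat N)" using p7 by blast
  show "\<And>v. v \<in> vertices G \<Longrightarrow> \<exists>l. is_cycle G l \<and> isolated G l \<and> red_path G l \<and>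
        v \<in> cycle_vertices G l" using p8 by blast
  show "\<And>e. e \<in> paths G \<Longrightarrow> dg G e = (0, 1) \<Longrightarrow>
        (\<exists>n. enat n \<le> N \<and> rg G e \<in> V n \<and> sc G e \<in> V n)" using p9 by blast
qed

lemma class_chain: "is_2graph G \<Longrightarrow> X \<in> cycle_classes G V n \<Longrightarrow> \<exists>x k. chainX G X x k"
proof -
  assume g: "is_2graph G" and X: "X \<in> cycle_classes G V n"
  interpret T: tg G by unfold_locales (rule g)
  obtain l where l: "X = cycle_vertices G l" "is_cycle G l" "isolated G l" "red_path G l"
    using X unfolding cycle_classes_def by blast
  show ?thesis using T.cycle_chain[OF l(2-4)] l(1) by simp
qed

lemma class_level:
  assumes B: "rank2_bratteli G N V" and m: "enat m \<le> N" and X: "X \<in> cycle_classes G V m"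
  shows "X \<subseteq> V m"
proof -
  note bf = brat_facts[OF B]
  obtain x k where c: "chainX G X x k" using class_chain[OF bf(1) X] by blast
  have Xe: "X = x ` {..k}" using c unfolding chainX_def by blast
  have ed: "\<forall>j<k. \<exists>e\<in>paths G. dg G e = (0,1) \<and> rg G e = x j \<and> sc G e = x (Suc j)"
    using c unfolding chainX_def by blast
  have "x 0 \<in> vertices G" using c unfolding chainX_def by auto
  then obtain m0 where m0: "enat m0 \<le> N" "x 0 \<in> V m0" using bf(4) by auto
  have all: "x j \<in> V m0" if "j \<le> k" for j
    using that
  proof (induction j)
    case 0 thus ?case using m0 by simp
  next
    case (Suc j)
    have jk: "j < k" using Suc.prems by simp
    obtain e where e: "e \<in> paths G" "dg G e = (0,1)" "rg G e = x j" "sc G e = x (Suc j)"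
      using ed jk by blast
    obtain n' where n': "enat n' \<le> N" "rg G e \<in> V n'" "sc G e \<in> V n'" using bf(10)[OF e(1,2)] by blast
    have "x j \<in> V m0" using Suc by simp
    hence "n' = m0" using bf(5)[OF n'(1) m0(1)] n'(2) e(3) by simp
    thus ?case using n'(3) e(4) by simp
  qed
  obtain l where "X = cycle_vertices G l" "cycle_vertices G l \<inter> V m \<noteq> {}"
    using X unfolding cycle_classes_def by blast
  then obtain v where v: "v \<in> X" "v \<in> V m" by blast
  then obtain j where j: "j \<le> k" "v = x j" using Xe by auto
  have "m = m0" using bf(5)[OF m m0(1) v(2)] all[OF j(1)] j(2) by simp
  thus ?thesis using all Xe by auto
qed

lemma class_fin:
  assumes B: "rank2_bratteli G N V" and m: "enat m \<le> N"
  shows "finite (cycle_classes G V m)"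
proof -
  have "cycle_classes G V m \<subseteq> Pow (V m)" using class_level[OF B m] by blast
  moreover have "finite (Pow (V m))" using brat_facts(3)[OF B m] by simp
  ultimately show ?thesis by (rule finite_subset)
qed

theorem lemma4p2:
  fixes G :: "'a twograph" and N :: enat and V :: "nat \<Rightarrow> 'a set"
  assumes "rank2_bratteli G N V"
  shows "\<forall>n. enat n < N \<longrightarrow>
    (\<forall>X\<in>cycle_classes G V n. \<forall>Y\<in>cycle_classes G V (Suc n).
        (\<forall>v\<in>X. card (blue_edges G {v} Y) = Amat G Y X) \<and>
        (\<forall>w\<in>Y. card (blue_edges G X {w}) = Bmat G Y X) \<and>
        Amat G Y X * card X = card (blue_edges G X Y) \<and>
        card (blue_edges G X Y) = card Y * Bmat G Y X) \<and>
    (\<forall>Y\<in>cycle_classes G V (Suc n). \<exists>X\<in>cycle_classes G V n. Amat G Y X \<noteq> 0) \<and>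
    (\<forall>X\<in>cycle_classes G V n. \<exists>Y\<in>cycle_classes G V (Suc n). Amat G Y X \<noteq> 0) \<and>
    (\<forall>Y\<in>cycle_classes G V (Suc n). \<exists>X\<in>cycle_classes G V n. Bmat G Y X \<noteq> 0) \<and>
    (\<forall>X\<in>cycle_classes G V n. \<exists>Y\<in>cycle_classes G V (Suc n). Bmat G Y X \<noteq> 0) \<and>
    (\<forall>Y\<in>cycle_classes G V (Suc n). \<forall>X\<in>cycle_classes G V n.
        (\<Sum>X'\<in>cycle_classes G V n. Amat G Y X' * Tmat X' X) =
        (\<Sum>Y'\<in>cycle_classes G V (Suc n). Tmat Y Y' * Bmat G Y' X))"
proof (intro allI impI)
  fix n assume nN: "enat n < N"
  note B = assms
  note bf = brat_facts[OF B]
  interpret T: tg G by unfold_locales (rule bf(1))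
  have n1: "enat n \<le> N" using nN by simp
  have n2: "enat (Suc n) \<le> N" using nN by (simp add: Suc_ile_eq)
  have z: "enat 0 \<le> N" by (simp add: zero_enat_def[symmetric])
  let ?C = "cycle_classes G V n" and ?D = "cycle_classes G V (Suc n)"
  have mat: "(\<forall>v\<in>X. card (blue_edges G {v} Y) = Amat G Y X) \<and>
        (\<forall>w\<in>Y. card (blue_edges G X {w}) = Bmat G Y X) \<and>
        Amat G Y X * card X = card (blue_edges G X Y) \<and>
        card (blue_edges G X Y) = card Y * Bmat G Y X" if XY: "X \<in> ?C" "Y \<in> ?D" for X Y
  proof -
    obtain x k where cX: "chainX G X x k" using class_chain[OF bf(1) XY(1)] by blast
    obtain y k' where cY: "chainX G Y y k'" using class_chain[OF bf(1) XY(2)] by blast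
    show ?thesis by (rule T.matrices[OF cX cY bf(2)])
  qed
  have finb: "finite (blue_edges G X Y)" if X: "X \<in> ?C" for X Y
  proof -
    obtain x k where cX: "chainX G X x k" using class_chain[OF bf(1) X] by blast
    show ?thesis by (rule T.fin_blue[OF bf(2) T.chain_fin[OF cX] T.chain_vert[OF cX]])
  qed
  have nz: "Amat G Y X \<noteq> 0 \<and> Bmat G Y X \<noteq> 0" if "X \<in> ?C" "Y \<in> ?D" "e \<in> blue_edges G X Y" for X Y e
  proof -
    have c: "card (blue_edges G X Y) \<noteq> 0" using finb[OF that(1)] that(3) by auto
    note m = mat[OF that(1,2)]
    have "Amat G Y X * card X = card (blue_edges G X Y)" using m by blast
    hence a: "Amat G Y X \<noteq> 0" using c by (metis mult_zero_left)
    have "card (blue_edges G X Y) = card Y * Bmat G Y X" using m by blast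
    hence "Bmat G Y X \<noteq> 0" using c by (metis mult_zero_right)
    thus ?thesis using a by blast
  qed
  have vclass: "\<exists>X\<in>cycle_classes G V m. v \<in> X" if "v \<in> V m" "enat m \<le> N" for v m
  proof -
    have "v \<in> vertices G" using bf(4) that by auto
    then obtain l where l: "is_cycle G l" "isolated G l" "red_path G l" "v \<in> cycle_vertices G l"
      using bf(9) by blast
    hence "cycle_vertices G l \<in> cycle_classes G V m" using that unfolding cycle_classes_def by blast
    thus ?thesis using l(4) by blast
  qed
  have rowsY: "\<exists>X\<in>?C. Amat G Y X \<noteq> 0 \<and> Bmat G Y X \<noteq> 0" if Y: "Y \<in> ?D" for Y
  proof -
    obtain y k' where cY: "chainX G Y y k'" using class_chain[OF bf(1) Y] by blast
    have w: "y 0 \<in> Y" using cY unfolding chainX_def by auto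
    have wV: "y 0 \<in> V (Suc n)" using class_level[OF B n2 Y] w by blast
    have wv: "y 0 \<in> vertices G" using T.chain_vert[OF cY] w by blast
    have "{e \<in> paths G. dg G e = (1, 0) \<and> sc G e = y 0} \<noteq> {}"
    proof
      assume "{e \<in> paths G. dg G e = (1, 0) \<and> sc G e = y 0} = {}"
      hence "y 0 \<in> V 0" using bf(7)[OF wv] by blast
      thus False using bf(5)[OF n2 z wV] by simp
    qed
    then obtain e where e: "e \<in> paths G" "dg G e = (1,0)" "sc G e = y 0" by blast
    obtain m where m: "enat (Suc m) \<le> N" "rg G e \<in> V m" "sc G e \<in> V (Suc m)" using bf(6)[OF e(1,2)] by blast
    have "Suc m = Suc n" using bf(5)[OF m(1) n2] m(3) e(3) wV by simp
    hence rV: "rg G e \<in> V n" using m(2) by simp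
    obtain X where X: "X \<in> ?C" "rg G e \<in> X" using vclass[OF rV n1] by blast
    have "e \<in> blue_edges G X Y" unfolding blue_edges_def using e X w by simp
    thus ?thesis using nz[OF X(1) Y] X(1) by blast
  qed
  have colsX: "\<exists>Y\<in>?D. Amat G Y X \<noteq> 0 \<and> Bmat G Y X \<noteq> 0" if X: "X \<in> ?C" for X
  proof -
    obtain x k where cX: "chainX G X x k" using class_chain[OF bf(1) X] by blast
    have v: "x 0 \<in> X" using cX unfolding chainX_def by auto
    have vV: "x 0 \<in> V n" using class_level[OF B n1 X] v by blast
    have vv: "x 0 \<in> vertices G" using T.chain_vert[OF cX] v by blast
    have "{e \<in> paths G. dg G e = (1, 0) \<and> rg G e = x 0} \<noteq> {}"
    proof
      assume "{e \<in> paths G. dg G e = (1, 0) \<and> rg G e = x 0} = {}"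
      hence h: "N \<noteq> \<infinity>" "x 0 \<in> V (the_enat N)" using bf(8)[OF vv] by blast+
      then obtain M where M: "N = enat M" by auto
      have "n = M" using bf(5)[OF n1, of M] M vV h(2) by simp
      thus False using nN M by simp
    qed
    then obtain e where e: "e \<in> paths G" "dg G e = (1,0)" "rg G e = x 0" by blast
    obtain m where m: "enat (Suc m) \<le> N" "rg G e \<in> V m" "sc G e \<in> V (Suc m)" using bf(6)[OF e(1,2)] by blast
    have m1: "enat m \<le> N" using m(1) by (metis Suc_ile_eq less_imp_le)
    have "m = n" using bf(5)[OF m1 n1] m(2) e(3) vV by simp
    hence sV: "sc G e \<in> V (Suc n)" using m(3) by simp
    obtain Y where Y: "Y \<in> ?D" "sc G e \<in> Y" using vclass[OF sV n2] by blast
    have "e \<in> blue_edges G X Y" unfolding blue_edges_def using e Y v by simp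
    thus ?thesis using nz[OF X Y(1)] Y(1) by blast
  qed
  have finC: "finite ?C" by (rule class_fin[OF B n1])
  have finD: "finite ?D" by (rule class_fin[OF B n2])
  have sums: "(\<Sum>X'\<in>?C. Amat G Y X' * Tmat X' X) = (\<Sum>Y'\<in>?D. Tmat Y Y' * Bmat G Y' X)"
    if X: "X \<in> ?C" and Y: "Y \<in> ?D" for X Y
  proof -
    have "(\<Sum>X'\<in>?C. Amat G Y X' * Tmat X' X) = (\<Sum>X'\<in>?C. if X' = X then Amat G Y X' * card X' else 0)"
      by (rule sum.cong) (auto simp: Tmat_def)
    also have "\<dots> = Amat G Y X * card X" using finC X by simp
    also have "\<dots> = card Y * Bmat G Y X" using mat[OF X Y] by simp
    also have "\<dots> = (\<Sum>Y'\<in>?D. if Y = Y' then card Y * Bmat G Y' X else 0)" using finD Y by simp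
    also have "\<dots> = (\<Sum>Y'\<in>?D. Tmat Y Y' * Bmat G Y' X)"
      by (rule sum.cong) (auto simp: Tmat_def)
    finally show ?thesis .
  qed
  show "(\<forall>X\<in>?C. \<forall>Y\<in>?D.
        (\<forall>v\<in>X. card (blue_edges G {v} Y) = Amat G Y X) \<and>
        (\<forall>w\<in>Y. card (blue_edges G X {w}) = Bmat G Y X) \<and>
        Amat G Y X * card X = card (blue_edges G X Y) \<and>
        card (blue_edges G X Y) = card Y * Bmat G Y X) \<and>
    (\<forall>Y\<in>?D. \<exists>X\<in>?C. Amat G Y X \<noteq> 0) \<and>
    (\<forall>X\<in>?C. \<exists>Y\<in>?D. Amat G Y X \<noteq> 0) \<and>
    (\<forall>Y\<in>?D. \<exists>X\<in>?C. Bmat G Y X \<noteq> 0) \<and>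
    (\<forall>X\<in>?C. \<exists>Y\<in>?D. Bmat G Y X \<noteq> 0) \<and>
    (\<forall>Y\<in>?D. \<forall>X\<in>?C.
        (\<Sum>X'\<in>?C. Amat G Y X' * Tmat X' X) =
        (\<Sum>Y'\<in>?D. Tmat Y Y' * Bmat G Y' X))"
    apply (intro conjI)
         subgoal using mat by blast
        subgoal using rowsY by blast
       subgoal using colsX by blast
      subgoal using rowsY by blast
     subgoal using colsX by blast
    subgoal using sums by blast
    done
qed

end
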